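(* Let $f(x,y)=\alpha+\beta x+\gamma y$, where $\alpha,\beta,\gamma$ are positive real numbers with $\alpha\le1$ and $2\beta>\gamma$. For every $\epsilon>0$ there is $\nu_0(\epsilon)$ such that, for all integers $\nu\ge\nu_0(\epsilon)$ and $\mu$ with $$2\nu\le\mu<2\gamma(2\beta-\gamma)\nu^2+(2\alpha-\gamma-1)\nu-\frac{(2-2\alpha+\gamma)^2}{8\gamma(2\beta-\gamma)}-\epsilon,$$ we have $f(x,y)\ge\frac{\mu}{\nu}$ for every $(x,y)\in\Omega:=\{(x,y)\in\mathbb{R}^2: x>0,\ y\ge0,\ x(\tfrac12x+\tfrac12+y)+\nu\ge\mu\}$. *)

theory Defs
  imports Complex_Main
begin

end

theory Submission
  imports Defs
begin

lemma quad_between: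
  fixes p q x B D :: real
  assumes "p \<le> x" "x \<le> q" "p^2+B*p+D \<le> 0" "q^2+B*q+D \<le> 0"
  shows "x^2+B*x+D \<le> 0"
proof (cases "p = q")
  case True then show ?thesis using assms by auto
next
  case False
  then have qp: "q - p > 0" using assms by auto
  have id: "(q-p)*(x^2+B*x+D) = (q-x)*(p^2+B*p+D) + (x-p)*(q^2+B*q+D) + (q-p)*((x-p)*(x-q))"
    by (simp add: algebra_simps power2_eq_square)
  have "(q-x)*(p^2+B*p+D) \<le> 0" using assms by (simp add: mult_nonneg_nonpos)
  moreover have "(x-p)*(q^2+B*q+D) \<le> 0" using assms by (simp add: mult_nonneg_nonpos)
  moreover have "(q-p)*((x-p)*(x-q)) \<le> 0" using assms qp
    by (intro mult_nonneg_nonpos) (auto simp: mult_nonneg_nonpos)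
  ultimately have "(q-p)*(x^2+B*x+D) \<le> 0" using id by linarith
  then show ?thesis using qp by (simp add: mult_le_0_iff)
qed

lemma core:
  fixes \<alpha> \<beta> \<gamma> n m \<epsilon> x y K C a :: real
  assumes "\<alpha> > 0" "\<beta> > 0" "\<gamma> > 0" "\<alpha> \<le> 1" "2 * \<beta> > \<gamma>" "\<epsilon> > 0"
    and K: "K = 2 * \<gamma> * (2 * \<beta> - \<gamma>)"
    and C: "C = (2 - 2 * \<alpha> + \<gamma>)^2 / (8 * \<gamma> * (2 * \<beta> - \<gamma>))"
    and a: "a = \<alpha> - \<gamma>/2"
    and n1: "n \<ge> 1" and n2: "n \<ge> (2-a)^2/K"
    and n3: "K*\<epsilon>*n^2 > 2*(1-a)*(C+\<epsilon>)*n + (C+\<epsilon>)^2"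
    and m1: "2*n \<le> m"
    and m2: "m < K * n^2 + (2 * \<alpha> - \<gamma> - 1) * n - C - \<epsilon>"
    and x: "x > 0" and cons: "x * (x / 2 + 1 / 2 + y) + n \<ge> m"
  shows "\<alpha> + \<beta> * x + \<gamma> * y \<ge> m / n"
proof -
  have Kp: "K > 0" using K assms by simp
  have C4: "C = (2 - 2 * \<alpha> + \<gamma>)^2 / (4*K)" using C K by (simp add: algebra_simps)
  have e: "2 - 2 * \<alpha> + \<gamma> = 2*(1-a)" using a by simp
  have "K * C = (2 - 2 * \<alpha> + \<gamma>)^2 / 4" using C4 Kp by simp
  also have "\<dots> = (2*(1-a))^2 / 4" by (simp only: e)
  also have "\<dots> = (1-a)^2" by (simp add: power2_eq_square field_simps)
  finally have KC: "K * C = (1-a)^2" .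
  define M where "M = K * n^2 + (2 * \<alpha> - \<gamma> - 1) * n - C - \<epsilon>"
  define B where "B = -2*a*n - K*n^2"
  define D where "D = a^2*n^2 + K*n^3"
  have g: "\<And>z. z^2 + B*z + D = (z - a*n)^2 - K*n^2*(z-n)"
    unfolding B_def D_def by (simp add: algebra_simps power2_eq_square power3_eq_cube)
  have gM: "M^2 + B*M + D = -K*\<epsilon>*n^2 + 2*(1-a)*(C+\<epsilon>)*n + (C+\<epsilon>)^2"
  proof -
    have h1: "M^2 + B*M + D = (M - a*n)^2 - K*n^2*(M-n)" by (rule g)
    have h2: "(M - a*n)^2 - K*n^2*(M-n) = (1-a)^2*n^2 - K*C*n^2 - K*\<epsilon>*n^2 + 2*(1-a)*(C+\<epsilon>)*n + (C+\<epsilon>)^2"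
      unfolding M_def a by (simp add: algebra_simps power2_eq_square)
    moreover have "K*C*n^2 = (1-a)^2*n^2" using KC by simp
    ultimately show ?thesis using h1 h2 by linarith
  qed
  have gMle: "M^2 + B*M + D \<le> 0" using gM n3 by linarith
  have "(2-a)^2 \<le> K*n" using n2 Kp by (simp add: field_simps)
  then have "(2-a)^2*n^2 \<le> K*n*n^2" using n1 by (intro mult_right_mono) auto
  moreover have "(2*n)^2 + B*(2*n) + D = (2-a)^2*n^2 - K*n*n^2"
    unfolding g by (simp add: algebra_simps power2_eq_square)
  ultimately have g2: "(2*n)^2 + B*(2*n) + D \<le> 0" by linarith
  have "m^2 + B*m + D \<le> 0"
    using quad_between[of "2*n" m M B D] m1 m2 g2 gMle unfolding M_def by linarith
  then have sq: "(m - a*n)^2 \<le> K*n^2*(m-n)" using g[of m] by linarith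
  define s where "s = m/n - a"
  define c where "c = m - n"
  have cpos: "c > 0" using c_def m1 n1 by simp
  have "(m - a*n)^2 = n^2 * s^2" using n1 unfolding s_def by (simp add: field_simps power2_eq_square)
  then have "n^2 * s^2 \<le> n^2 * (K*c)" using sq unfolding c_def by (simp add: algebra_simps)
  moreover have "n^2 > 0" using n1 by simp
  ultimately have s2: "s^2 \<le> K*c" by simp
  define P where "P = \<beta> - \<gamma>/2"
  have Pp: "P > 0" using P_def assms by simp
  have KPQ: "K*c = 4*P*(\<gamma>*c)" unfolding K P_def by (simp add: algebra_simps)
  have yb: "\<gamma>*y \<ge> \<gamma>*(c/x - x/2 - 1/2)"
  proof -
    have "x*y \<ge> c - x^2/2 - x/2" using cons c_def by (simp add: algebra_simps power2_eq_square)
    then have "y \<ge> c/x - x/2 - 1/2" using x by (simp add: field_simps power2_eq_square)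
    then show ?thesis using assms by simp
  qed
  have f: "\<alpha> + \<beta> * x + \<gamma> * y \<ge> a + P*x + \<gamma>*c/x"
    using yb unfolding a P_def by (simp add: algebra_simps)
  have key: "P*x + \<gamma>*c/x \<ge> s"
  proof -
    have "4*P*(P*x^2 - s*x + \<gamma>*c) = (2*P*x - s)^2 + (4*P*(\<gamma>*c) - s^2)"
      by (simp add: algebra_simps power2_eq_square)
    also have "\<dots> \<ge> 0" using s2 KPQ by simp
    finally have "P*x^2 - s*x + \<gamma>*c \<ge> 0" using Pp by (simp add: zero_le_mult_iff)
    then have "(P*x^2 + \<gamma>*c)/x \<ge> s" using x by (simp add: field_simps)
    moreover have "(P*x^2 + \<gamma>*c)/x = P*x + \<gamma>*c/x" using x by (simp add: field_simps power2_eq_square)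
    ultimately show ?thesis by simp
  qed
  show ?thesis using f key unfolding s_def by linarith
qed

theorem lemma4p3:
  fixes \<alpha> \<beta> \<gamma> :: real
  assumes "\<alpha> > 0" "\<beta> > 0" "\<gamma> > 0" "\<alpha> \<le> 1" "2 * \<beta> > \<gamma>"
  shows "\<forall>\<epsilon>::real. \<epsilon> > 0 \<longrightarrow>
    (\<exists>\<nu>0::int. \<forall>\<nu> \<mu> :: int. \<nu> \<ge> \<nu>0 \<longrightarrow>
       2 * \<nu> \<le> \<mu> \<longrightarrow>
       real_of_int \<mu> < 2 * \<gamma> * (2 * \<beta> - \<gamma>) * (real_of_int \<nu>)^2
           + (2 * \<alpha> - \<gamma> - 1) * real_of_int \<nu>
           - (2 - 2 * \<alpha> + \<gamma>)^2 / (8 * \<gamma> * (2 * \<beta> - \<gamma>)) - \<epsilon> \<longrightarrow>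
       (\<forall>x y :: real. x > 0 \<longrightarrow> y \<ge> 0 \<longrightarrow>
          x * (x / 2 + 1 / 2 + y) + real_of_int \<nu> \<ge> real_of_int \<mu> \<longrightarrow>
          \<alpha> + \<beta> * x + \<gamma> * y \<ge> real_of_int \<mu> / real_of_int \<nu>))"
proof (intro allI impI)
  fix \<epsilon> :: real assume ep: "\<epsilon> > 0"
  define K where "K = 2 * \<gamma> * (2 * \<beta> - \<gamma>)"
  define C where "C = (2 - 2 * \<alpha> + \<gamma>)^2 / (8 * \<gamma> * (2 * \<beta> - \<gamma>))"
  define a where "a = \<alpha> - \<gamma>/2"
  have Kp: "K > 0" using K_def assms by simp
  have a1: "1 - a > 0" using a_def assms by simp
  have Cp: "C \<ge> 0" using C_def assms by simp
  define X where "X = 2*(1-a)*(C+\<epsilon>) + (C+\<epsilon>)^2"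
  define N where "N = max 1 (max ((2-a)^2/K) ((X+1)/(K*\<epsilon>)))"
  show "\<exists>\<nu>0::int. \<forall>\<nu> \<mu> :: int. \<nu> \<ge> \<nu>0 \<longrightarrow>
       2 * \<nu> \<le> \<mu> \<longrightarrow>
       real_of_int \<mu> < 2 * \<gamma> * (2 * \<beta> - \<gamma>) * (real_of_int \<nu>)^2
           + (2 * \<alpha> - \<gamma> - 1) * real_of_int \<nu>
           - (2 - 2 * \<alpha> + \<gamma>)^2 / (8 * \<gamma> * (2 * \<beta> - \<gamma>)) - \<epsilon> \<longrightarrow>
       (\<forall>x y :: real. x > 0 \<longrightarrow> y \<ge> 0 \<longrightarrow>
          x * (x / 2 + 1 / 2 + y) + real_of_int \<nu> \<ge> real_of_int \<mu> \<longrightarrow>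
          \<alpha> + \<beta> * x + \<gamma> * y \<ge> real_of_int \<mu> / real_of_int \<nu>)"
  proof (intro exI[of _ "\<lceil>N\<rceil>"] allI impI)
    fix \<nu> \<mu> :: int and x y :: real
    assume h1: "\<nu> \<ge> \<lceil>N\<rceil>" and h2: "2 * \<nu> \<le> \<mu>"
      and h3: "real_of_int \<mu> < 2 * \<gamma> * (2 * \<beta> - \<gamma>) * (real_of_int \<nu>)^2
           + (2 * \<alpha> - \<gamma> - 1) * real_of_int \<nu>
           - (2 - 2 * \<alpha> + \<gamma>)^2 / (8 * \<gamma> * (2 * \<beta> - \<gamma>)) - \<epsilon>"
      and hx: "x > 0" and hy: "y \<ge> 0"
      and hc: "x * (x / 2 + 1 / 2 + y) + real_of_int \<nu> \<ge> real_of_int \<mu>"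
    define n where "n = real_of_int \<nu>"
    have nN: "n \<ge> N" using h1 unfolding n_def by linarith
    have n1: "n \<ge> 1" using nN N_def by simp
    have n2: "n \<ge> (2-a)^2/K" using nN N_def by simp
    have "n \<ge> (X+1)/(K*\<epsilon>)" using nN N_def by simp
    then have "K*\<epsilon>*n \<ge> X + 1" using Kp ep by (simp add: field_simps)
    then have "K*\<epsilon>*n*n \<ge> (X+1)*n" using n1 by (intro mult_right_mono) auto
    moreover have "X \<ge> 0" unfolding X_def using a1 Cp ep by simp
    moreover have "(C+\<epsilon>)^2 * n \<ge> (C+\<epsilon>)^2 * 1" using n1 by (intro mult_left_mono) auto
    ultimately have n3: "K*\<epsilon>*n^2 > 2*(1-a)*(C+\<epsilon>)*n + (C+\<epsilon>)^2"
      unfolding X_def using n1 by (simp add: algebra_simps power2_eq_square)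
    show "\<alpha> + \<beta> * x + \<gamma> * y \<ge> real_of_int \<mu> / real_of_int \<nu>"
      using core[OF assms ep K_def C_def a_def n1 n2 n3, of "real_of_int \<mu>" x y] h2 h3 hx hc
      unfolding n_def K_def C_def by simp
  qed
qed

end
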